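(* In the setting described in the context, the perimeter of $K$ satisfies $$\mathcal{P}=\int_{\partial K}\ell(\rho)^2\,\frac{d\omega}{ds}\,d\theta=\int_{\partial K}\kappa_g\,\ell(\rho)^2\,\frac{\ell(x)c(x)}{\ell(r)c(r)}\,d\theta=\int_{\partial K}\kappa_g\,\ell(\rho)^2\,\frac{1-k\,a(x)}{1-k\,a(r)}\,d\theta .$$
   Context: $M$ is $\mathbb{E}^2$, $\mathbb{S}^2$ or $\mathbb{H}^2$ of constant curvature $k$ ($k=0$, $k>0$, $k<0$). Functions: for $k>0$, $\ell(r)=\sin(\sqrt{k}r)/\sqrt{k}$, $a(r)=(1-\cos(\sqrt{k}r))/k$, $c(r)=\sqrt{k}\cot(\sqrt{k}r)$; for $k=0$, $\ell(r)=r$, $a(r)=r^2/2$, $c(r)=1/r$; for $k<0$, $\ell(r)=\sinh(\sqrt{-k}r)/\sqrt{-k}$, $a(r)=(1-\cosh(\sqrt{-k}r))/k$, $c(r)=\sqrt{-k}\coth(\sqrt{-k}r)$ (these make sense for negative $r$ too; $\ell(r)c(r)=1-ka(r)$). Setting: fix $O\in M$; $K\subset M$ is a compact convex set with nonempty interior and $C^2$ boundary (on $\mathbb{S}^2$, $K$ lies in the open hemisphere centered at $O$); $\partial K$ is oriented counterclockwise and parametrized by arclength $s$; $\kappa_g\ge0$ is its geodesic curvature. For $P=P(s)\in\partial K$ let $\lambda$ be the tangent geodesic (support line) of $K$ at $P$. For an angle $\omega$ let $\gamma_\omega$ be the unit-speed geodesic with $\gamma_\omega(0)=O$ and initial direction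 at angle $\omega$. Then $\omega=\omega(s)$ (chosen continuous in $s$) and $r=r(s)\in\mathbb{R}$ are determined by: $\lambda$ is perpendicular to $\gamma_\omega$ at $F=\gamma_\omega(r)$ and $K$ lies in the closed half-plane bounded by $\lambda$ containing $\gamma_\omega(t)$ for $t<r$. $x=x(s)$ is the signed distance along $\lambda$ from $F$ to $P$, positive iff $P$ lies on the ray from $F$ in the direction obtained by rotating $\gamma_\omega'(r)$ clockwise by $\pi/2$. Additionally $(\rho,\theta)$ are geodesic polar coordinates of $P$ about $O$; $\ell(\rho)^2\,d\theta$ is a smooth 1-form (extending across $O$), and the integrals are of 1-forms along $\partial K$. *)

theory Defs
  imports "HOL-Analysis.Analysis"
begin

text \<open>
  Uniform model of the space form M of constant curvature k (E^2, S^2, H^2):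
  M_k = {p in R^3. k (p1^2 + p2^2) + p3^2 = 1}, restricted to p3 > 0 when k <= 0
  (for k = 0 this is the plane p3 = 1; for k > 0 a sphere of radius 1/sqrt k in
  the coordinates (p1, p2, p3/sqrt k); for k < 0 the upper hyperboloid sheet).
  The Riemannian metric is induced by the constant form
  Bk v w = v1 w1 + v2 w2 + v3 w3 / k  (for k = 0 tangent vectors have v3 = 0 and
  the last term is 0, matching the HOL convention x / 0 = 0).
  The base point is O = (0,0,1); angles are measured in the frame
  (1,0,0), (0,1,0) of the tangent plane at O, whose orientation is the
  counterclockwise one.
\<close>

definition ell :: "real \<Rightarrow> real \<Rightarrow> real" where
  "ell k r = (if k > 0 then sin (sqrt k * r) / sqrt k
              else if k = 0 then r
              else sinh (sqrt (-k) * r) / sqrt (-k))"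

definition aa :: "real \<Rightarrow> real \<Rightarrow> real" where
  "aa k r = (if k > 0 then (1 - cos (sqrt k * r)) / k
             else if k = 0 then r\<^sup>2 / 2
             else (1 - cosh (sqrt (-k) * r)) / k)"

definition cc :: "real \<Rightarrow> real \<Rightarrow> real" where
  "cc k r = (if k > 0 then sqrt k * cot (sqrt k * r)
             else if k = 0 then 1 / r
             else sqrt (-k) * cosh (sqrt (-k) * r) / sinh (sqrt (-k) * r))"

definition Mk :: "real \<Rightarrow> (real^3) set" where
  "Mk k = {p. k * ((p$1)\<^sup>2 + (p$2)\<^sup>2) + (p$3)\<^sup>2 = 1 \<and> (k > 0 \<or> p$3 > 0)}"

definition Oo :: "real^3" where
  "Oo = vector [0, 0, 1]"

definition Bk :: "real \<Rightarrow> real^3 \<Rightarrow> real^3 \<Rightarrow> real" where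
  "Bk k v w = v$1 * w$1 + v$2 * w$2 + v$3 * w$3 / k"

text \<open>Counterclockwise rotation by pi/2 of a tangent vector v at p
  (for k > 0: the cross product with the outward unit normal).\<close>
definition Jk :: "real \<Rightarrow> real^3 \<Rightarrow> real^3 \<Rightarrow> real^3" where
  "Jk k p v = vector [p$2 * v$3 - p$3 * v$2, p$3 * v$1 - p$1 * v$3,
                      k * (p$1 * v$2 - p$2 * v$1)]"

text \<open>Unit-speed geodesic t |-> exp_p(t v) with initial point p and unit initial velocity v.\<close>
definition expm :: "real \<Rightarrow> real^3 \<Rightarrow> real^3 \<Rightarrow> real \<Rightarrow> real^3" where
  "expm k p v t = (1 - k * aa k t) *\<^sub>R p + ell k t *\<^sub>R v"

definition gamma_om :: "real \<Rightarrow> real \<Rightarrow> real \<Rightarrow> real^3" where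
  "gamma_om k w = expm k Oo (vector [cos w, sin w, 0])"

text \<open>Geodesic segment from p to q (p, q in M, in the open hemisphere if k > 0):
  central projection onto M of the chord; geodesic convexity.\<close>
definition nrm :: "real \<Rightarrow> real^3 \<Rightarrow> real^3" where
  "nrm k v = (1 / sqrt (k * ((v$1)\<^sup>2 + (v$2)\<^sup>2) + (v$3)\<^sup>2)) *\<^sub>R v"

definition gconvex :: "real \<Rightarrow> (real^3) set \<Rightarrow> bool" where
  "gconvex k K \<longleftrightarrow> (\<forall>p\<in>K. \<forall>q\<in>K. \<forall>t\<in>{0..1}. nrm k ((1 - t) *\<^sub>R p + t *\<^sub>R q) \<in> K)"

text \<open>Closed half-plane bounded by the geodesic through F = gamma_om k w r
  perpendicular to gamma_om k w, on the side containing gamma_om k w t for t < r.\<close>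
definition halfplane :: "real \<Rightarrow> real \<Rightarrow> real \<Rightarrow> (real^3) set" where
  "halfplane k w r = {p \<in> Mk k.
      Bk k (p - gamma_om k w r) (vector_derivative (gamma_om k w) (at r)) \<le> 0}"

text \<open>The 1-form ell(rho)^2 d theta evaluated at p on the tangent vector v: with
  p = (ell rho cos theta, ell rho sin theta, 1 - k a rho) it equals X dY - Y dX.\<close>
definition lsq_dtheta :: "real^3 \<Rightarrow> real^3 \<Rightarrow> real" where
  "lsq_dtheta p v = p$1 * v$2 - p$2 * v$1"

definition C2_curve :: "(real \<Rightarrow> real^3) \<Rightarrow> bool" where
  "C2_curve g \<longleftrightarrow> (\<forall>s. g differentiable (at s)) \<and>
     (\<forall>s. (\<lambda>t. vector_derivative g (at t)) differentiable (at s)) \<and>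
     continuous_on UNIV (\<lambda>s. vector_derivative (\<lambda>t. vector_derivative g (at t)) (at s))"

definition kappa_g :: "real \<Rightarrow> (real \<Rightarrow> real^3) \<Rightarrow> real \<Rightarrow> real" where
  "kappa_g k g s = Bk k (vector_derivative (\<lambda>t. vector_derivative g (at t)) (at s))
                        (Jk k (g s) (vector_derivative g (at s)))"

end

theory Submission
  imports Defs
begin


definition Cf :: "real \<Rightarrow> real \<Rightarrow> real" where "Cf k r = 1 - k * aa k r"

lemma Cf_alt: "Cf k r = (if k > 0 then cos (sqrt k * r) else if k = 0 then 1 else cosh (sqrt (-k) * r))"
  unfolding Cf_def aa_def by auto

lemma Cf_ell: "(Cf k r)\<^sup>2 + k * (ell k r)\<^sup>2 = 1"
proof -
  consider "k > 0" | "k = 0" | "k < 0" by linarith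
  then show ?thesis
  proof cases
    case 1
    then have "k * (sin (sqrt k * r) / sqrt k)\<^sup>2 = (sin (sqrt k * r))\<^sup>2"
      by (simp add: power_divide)
    then show ?thesis using 1 by (simp add: Cf_alt ell_def)
  next
    case 2 then show ?thesis by (simp add: Cf_alt ell_def)
  next
    case 3
    then have "k * (sinh (sqrt (-k) * r) / sqrt (-k))\<^sup>2 = - (sinh (sqrt (-k) * r))\<^sup>2"
      by (simp add: power_divide)
    moreover have "(cosh (sqrt (-k) * r))\<^sup>2 - (sinh (sqrt (-k) * r))\<^sup>2 = 1"
      by (simp add: cosh_square_eq)
    ultimately show ?thesis using 3 by (simp add: Cf_alt ell_def)
  qed
qed

lemma ell_deriv: "(ell k has_real_derivative Cf k r) (at r)"
proof -
  consider "k > 0" | "k = 0" | "k < 0" by linarith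
  then show ?thesis
  proof cases
    case 1
    have "((\<lambda>r. sin (sqrt k * r) / sqrt k) has_real_derivative cos (sqrt k * r)) (at r)"
      using 1 by (auto intro!: derivative_eq_intros simp: mult.assoc)
    then show ?thesis using 1 unfolding ell_def[abs_def] Cf_alt by simp
  next
    case 2 then show ?thesis unfolding ell_def[abs_def] Cf_alt by (auto intro!: derivative_eq_intros)
  next
    case 3
    have "((\<lambda>r. sinh (sqrt (-k) * r) / sqrt (-k)) has_real_derivative cosh (sqrt (-k) * r)) (at r)"
    proof -
      have e: "sqrt (-k) * sqrt (-k) = -k" using 3 by simp
      show ?thesis using 3 by (auto intro!: derivative_eq_intros simp: mult.assoc e)
    qed
    then show ?thesis using 3 unfolding ell_def[abs_def] Cf_alt by simp
  qed
qed

lemma Cf_deriv: "(Cf k has_real_derivative (- k * ell k r)) (at r)"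
proof -
  consider "k > 0" | "k = 0" | "k < 0" by linarith
  then show ?thesis
  proof cases
    case 1
    have "((\<lambda>r. cos (sqrt k * r)) has_real_derivative - k * (sin (sqrt k * r) / sqrt k)) (at r)"
      using 1 by (auto intro!: derivative_eq_intros simp: field_simps real_sqrt_mult_self)
    then show ?thesis using 1 unfolding ell_def Cf_alt[abs_def] by simp
  next
    case 2 then show ?thesis unfolding ell_def Cf_alt[abs_def] by (auto intro!: derivative_eq_intros)
  next
    case 3
    have "((\<lambda>r. cosh (sqrt (-k) * r)) has_real_derivative - k * (sinh (sqrt (-k) * r) / sqrt (-k))) (at r)"
    proof -
      have e: "sqrt (-k) * sqrt (-k) = -k" using 3 by simp
      show ?thesis using 3 by (auto intro!: derivative_eq_intros simp: field_simps mult.assoc[symmetric] e)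
    qed
    then show ?thesis using 3 unfolding ell_def Cf_alt[abs_def] by simp
  qed
qed

lemma gamma_om_comp: "gamma_om k w t = vector [ell k t * cos w, ell k t * sin w, Cf k t]"
  unfolding gamma_om_def expm_def Oo_def Cf_def
  by (simp add: vec_eq_iff forall_3 vector_3)

lemma gamma_om_deriv:
  "(gamma_om k w has_vector_derivative vector [Cf k t * cos w, Cf k t * sin w, - k * ell k t]) (at t)"
proof -
  have "((\<lambda>t. Cf k t *\<^sub>R Oo + ell k t *\<^sub>R vector [cos w, sin w, 0]) has_vector_derivative
     (- k * ell k t) *\<^sub>R Oo + Cf k t *\<^sub>R (vector [cos w, sin w, 0] :: real^3)) (at t)"
    using Cf_deriv[of k t] ell_deriv[of k t]
    by (auto intro!: derivative_eq_intros simp: has_real_derivative_iff_has_vector_derivative)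
  moreover have "(\<lambda>t. Cf k t *\<^sub>R Oo + ell k t *\<^sub>R vector [cos w, sin w, 0]) = gamma_om k w"
    unfolding gamma_om_def expm_def Cf_def by auto
  moreover have "(- k * ell k t) *\<^sub>R Oo + Cf k t *\<^sub>R (vector [cos w, sin w, 0] :: real^3)
     = vector [Cf k t * cos w, Cf k t * sin w, - k * ell k t]"
    unfolding Oo_def by (simp add: vec_eq_iff forall_3 vector_3)
  ultimately show ?thesis by simp
qed

lemma vd_gamma_om: "vector_derivative (gamma_om k w) (at t) = vector [Cf k t * cos w, Cf k t * sin w, - k * ell k t]"
  using gamma_om_deriv vector_derivative_at by blast



lemma qG_lemma:
  fixes k p1 p2 p3 t1 t2 t3 :: real
  assumes c1: "k*(p1\<^sup>2+p2\<^sup>2)+p3\<^sup>2 = 1" and c2: "k*(p1*t1+p2*t2)+p3*t3 = 0"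
    and c3: "t1\<^sup>2+t2\<^sup>2+t3\<^sup>2/k = 1" and c0: "k = 0 \<longrightarrow> p3 = 1 \<and> t3 = 0"
  shows "(p2*t3-p3*t2)\<^sup>2 + (p3*t1-p1*t3)\<^sup>2 + k*(p1*t2-p2*t1)\<^sup>2 = 1"
proof (cases "k = 0")
  case True
  then show ?thesis using c0 c3 by (simp add: power2_eq_square algebra_simps)
next
  case False
  have c3': "k*(t1\<^sup>2+t2\<^sup>2)+t3\<^sup>2 = k" using c3 False by (simp add: field_simps)
  have id: "k*((p2*t3-p3*t2)\<^sup>2 + (p3*t1-p1*t3)\<^sup>2 + k*(p1*t2-p2*t1)\<^sup>2)
     = (k*(p1\<^sup>2+p2\<^sup>2)+p3\<^sup>2) * (k*(t1\<^sup>2+t2\<^sup>2)+t3\<^sup>2) - (k*(p1*t1+p2*t2)+p3*t3)\<^sup>2"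
    by (simp add: power2_eq_square algebra_simps)
  then have "k*((p2*t3-p3*t2)\<^sup>2 + (p3*t1-p1*t3)\<^sup>2 + k*(p1*t2-p2*t1)\<^sup>2) = k * 1"
    using c1 c2 c3' by simp
  then show ?thesis using False by simp
qed

lemma parallel_lemma:
  fixes k n1 n2 n3 g1 g2 g3 :: real
  assumes "n1*g2 = n2*g1" "n1*g3 = n3*g1" "n2*g3 = n3*g2"
    and qn: "n1\<^sup>2+n2\<^sup>2+k*n3\<^sup>2 = 1" and qg: "g1\<^sup>2+g2\<^sup>2+k*g3\<^sup>2 = 1"
  shows "n1\<^sup>2+n2\<^sup>2 = g1\<^sup>2+g2\<^sup>2"
proof (cases "g3 = 0")
  case True
  then have "g1\<^sup>2+g2\<^sup>2 = 1" using qg by simp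
  moreover have "n3 = 0"
  proof (rule ccontr)
    assume "n3 \<noteq> 0"
    then have "g1 = 0" "g2 = 0" using assms(2,3) True by auto
    then show False using \<open>g1\<^sup>2+g2\<^sup>2 = 1\<close> by simp
  qed
  ultimately show ?thesis using qn by simp
next
  case False
  define m where "m = n3 / g3"
  have e1: "n1 = m*g1" "n2 = m*g2" "n3 = m*g3" using assms(2,3) False unfolding m_def
    by (auto simp: field_simps)
  have "m\<^sup>2 * (g1\<^sup>2+g2\<^sup>2+k*g3\<^sup>2) = 1" using qn unfolding e1 by (simp add: power2_eq_square algebra_simps)
  then have "m\<^sup>2 = 1" using qg by simp
  then show ?thesis unfolding e1 by (simp add: power_mult_distrib algebra_simps)
qed

lemma main_alg:
  fixes k a1 a2 p b1 b2 t u1 u2 w :: real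
  assumes c1: "k*(a1\<^sup>2+a2\<^sup>2)+p\<^sup>2 = 1" and c2: "k*(a1*b1+a2*b2)+p*t = 0"
    and c3: "b1\<^sup>2+b2\<^sup>2+t\<^sup>2/k = 1"
    and c4: "k*(b1\<^sup>2+b2\<^sup>2+a1*u1+a2*u2) + t\<^sup>2 + p*w = 0"
    and c5: "b1*u1+b2*u2+t*w/k = 0"
    and pp: "p > 0" and c0: "k = 0 \<longrightarrow> p = 1 \<and> t = 0 \<and> w = 0"
  defines "tau \<equiv> (a1*b1+a2*b2)/p\<^sup>2"
    and "tau' \<equiv> ((b1\<^sup>2+b2\<^sup>2+a1*u1+a2*u2)*p\<^sup>2 - (a1*b1+a2*b2)*(2*p*t))/(p\<^sup>2 * p\<^sup>2)"
    and "G1 \<equiv> a2*t - p*b2" and "G2 \<equiv> p*b1 - a1*t" and "G3 \<equiv> a1*b2 - a2*b1"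
    and "H1 \<equiv> a2*w - p*u2" and "H2 \<equiv> p*u1 - a1*w"
  shows "1 + k*tau\<^sup>2 > 0" and "G1\<^sup>2+G2\<^sup>2 > 0"
    and "tau'/(1+k*tau\<^sup>2) = 1 - (G1*H2 - G2*H1)/(G1\<^sup>2+G2\<^sup>2) * G3"
proof -
  have X: "G1*H2 - G2*H1 = p*(-t*(a1*u2-a2*u1) + w*(a1*b2-a2*b1) + p*(b1*u2-b2*u1))"
    unfolding G1_def G2_def H1_def H2_def by (simp add: algebra_simps)
  have "(1 + k*tau\<^sup>2 > 0 \<and> G1\<^sup>2+G2\<^sup>2 > 0) \<and> tau'/(1+k*tau\<^sup>2) = 1 - (G1*H2 - G2*H1)/(G1\<^sup>2+G2\<^sup>2) * G3"
  proof (cases "k = 0")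
    case True
    then have p1: "p = 1" and t0: "t = 0" and w0: "w = 0" using c0 by auto
    have bb: "b1\<^sup>2+b2\<^sup>2 = 1" using c3 True by simp
    have bu: "b1*u1+b2*u2 = 0" using c5 True by simp
    have g: "G1\<^sup>2+G2\<^sup>2 = 1" unfolding G1_def G2_def using p1 t0 bb by (simp add: power2_eq_square algebra_simps)
    have tau': "tau' = 1 + a1*u1+a2*u2" unfolding tau'_def using p1 t0 bb by simp
    have "(a1*b2 - a2*b1)*(b1*u2-b2*u1) = (a1*b1+a2*b2)*(b1*u1+b2*u2) - (a1*u1+a2*u2)*(b1\<^sup>2+b2\<^sup>2)"
      by (simp add: power2_eq_square algebra_simps)
    then have "(a1*b2 - a2*b1)*(b1*u2-b2*u1) = - (a1*u1+a2*u2)" using bu bb by simp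
    then have hh: "(b1*u2-b2*u1)*G3 = -(a1*u1+a2*u2)" unfolding G3_def by (simp add: mult.commute)
    have Xs: "G1*H2 - G2*H1 = b1*u2-b2*u1" using X p1 t0 w0 by simp
    show ?thesis using True g tau' hh unfolding Xs by simp
  next
    case False
    have c3': "k*(b1\<^sup>2+b2\<^sup>2)+t\<^sup>2 = k" using c3 False by (simp add: field_simps)
    have c5': "k*(b1*u1+b2*u2) + t*w = 0" using c5 False by (simp add: field_simps)
    have ab: "a1*b1+a2*b2 = -p*t/k" using c2 False by (simp add: field_simps)
    have aa: "a1\<^sup>2+a2\<^sup>2 = (1-p\<^sup>2)/k" using c1 False by (simp add: field_simps)
    have bb: "b1\<^sup>2+b2\<^sup>2 = (k-t\<^sup>2)/k" using c3' False by (simp add: field_simps)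
    have bu: "b1*u1+b2*u2 = -t*w/k" using c5' False by (simp add: field_simps)
    have au: "a1*u1+a2*u2 = -1 - p*w/k"
    proof -
      have "k*(a1*u1+a2*u2) = -(k*(b1\<^sup>2+b2\<^sup>2)) - t\<^sup>2 - p*w" using c4 by (simp add: algebra_simps)
      also have "\<dots> = -k - p*w" using c3' by simp
      finally show ?thesis using False by (simp add: field_simps)
    qed
    have G12: "G1\<^sup>2+G2\<^sup>2 = (t\<^sup>2+k*p\<^sup>2)/k"
    proof -
      have "G1\<^sup>2+G2\<^sup>2 = t\<^sup>2*(a1\<^sup>2+a2\<^sup>2) - 2*p*t*(a1*b1+a2*b2) + p\<^sup>2*(b1\<^sup>2+b2\<^sup>2)"
        unfolding G1_def G2_def by (simp add: power2_eq_square algebra_simps)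
      also have "\<dots> = t\<^sup>2*((1-p\<^sup>2)/k) - 2*p*t*(-p*t/k) + p\<^sup>2*((k-t\<^sup>2)/k)"
        unfolding aa ab bb by simp
      also have "\<dots> = (t\<^sup>2+k*p\<^sup>2)/k" using False by (simp add: field_simps power2_eq_square)
      finally show ?thesis .
    qed
    have pos: "(t\<^sup>2+k*p\<^sup>2)/k > 0"
    proof (cases "k > 0")
      case True then show ?thesis using pp by (intro divide_pos_pos add_nonneg_pos) auto
    next
      case kn: False
      then have kn: "k < 0" using False by simp
      have cs: "(a1*b1+a2*b2)\<^sup>2 \<le> (a1\<^sup>2+a2\<^sup>2)*(b1\<^sup>2+b2\<^sup>2)"
      proof -
        have "(a1*b1+a2*b2)\<^sup>2 + (a1*b2-a2*b1)\<^sup>2 = (a1\<^sup>2+a2\<^sup>2)*(b1\<^sup>2+b2\<^sup>2)"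
          by (simp add: power2_eq_square algebra_simps)
        then show ?thesis by (metis le_add_same_cancel1 zero_le_power2)
      qed
      have "(p*t)\<^sup>2 = k\<^sup>2*(a1*b1+a2*b2)\<^sup>2" unfolding ab using False by (simp add: power2_eq_square field_simps)
      also have "\<dots> \<le> k\<^sup>2*((a1\<^sup>2+a2\<^sup>2)*(b1\<^sup>2+b2\<^sup>2))" using cs by (simp add: mult_left_mono)
      also have "\<dots> = (1-p\<^sup>2)*(k-t\<^sup>2)" unfolding aa bb using False by (simp add: power2_eq_square field_simps)
      finally have "(p*t)\<^sup>2 \<le> (1-p\<^sup>2)*(k-t\<^sup>2)" .
      then have "t\<^sup>2+k*p\<^sup>2 \<le> k" by (simp add: power2_eq_square algebra_simps)
      then have "t\<^sup>2+k*p\<^sup>2 < 0" using kn by simp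
      then show ?thesis using kn by (simp add: divide_neg_neg)
    qed
    have tau: "tau = -t/(k*p)" unfolding tau_def ab using pp False by (simp add: power2_eq_square field_simps)
    have ktau: "1 + k*tau\<^sup>2 = (t\<^sup>2+k*p\<^sup>2)/(k*p\<^sup>2)"
      unfolding tau using pp False by (simp add: power2_eq_square field_simps)
    have ktaupos: "1 + k*tau\<^sup>2 > 0"
    proof -
      have "(t\<^sup>2+k*p\<^sup>2)/(k*p\<^sup>2) = ((t\<^sup>2+k*p\<^sup>2)/k) / p\<^sup>2" by simp
      moreover have "((t\<^sup>2+k*p\<^sup>2)/k) / p\<^sup>2 > 0" by (rule divide_pos_pos) (use pos pp in auto)
      ultimately show ?thesis unfolding ktau by simp
    qed
    have tau': "tau' = (t\<^sup>2 - p*w)/(k*p\<^sup>2)"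
    proof -
      have e: "b1\<^sup>2+b2\<^sup>2+a1*u1+a2*u2 = -(t\<^sup>2+p*w)/k" using c4 False by (simp add: field_simps)
      show ?thesis unfolding tau'_def ab e using pp False
        by (simp add: power2_eq_square field_simps)
    qed
    have axb2: "(a1*b2-a2*b1)\<^sup>2 = (k - t\<^sup>2 - k*p\<^sup>2)/k\<^sup>2"
    proof -
      have "(a1*b2-a2*b1)\<^sup>2 = (a1\<^sup>2+a2\<^sup>2)*(b1\<^sup>2+b2\<^sup>2) - (a1*b1+a2*b2)\<^sup>2"
        by (simp add: power2_eq_square algebra_simps)
      also have "\<dots> = (k - t\<^sup>2 - k*p\<^sup>2)/k\<^sup>2" unfolding aa bb ab using False
        by (simp add: power2_eq_square field_simps)
      finally show ?thesis .
    qed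
    have l1: "(a1*b2-a2*b1)*(a1*u2-a2*u1) = (a1\<^sup>2+a2\<^sup>2)*(b1*u1+b2*u2) - (a1*b1+a2*b2)*(a1*u1+a2*u2)"
      by (simp add: power2_eq_square algebra_simps)
    have l2: "(a1*b2-a2*b1)*(b1*u2-b2*u1) = (a1*b1+a2*b2)*(b1*u1+b2*u2) - (a1*u1+a2*u2)*(b1\<^sup>2+b2\<^sup>2)"
      by (simp add: power2_eq_square algebra_simps)
    have key: "k*(a1*b2-a2*b1)*(-t*(a1*u2-a2*u1) + w*(a1*b2-a2*b1) + p*(b1*u2-b2*u1)) = k*p + w"
    proof -
      have "k*(a1*b2-a2*b1)*(-t*(a1*u2-a2*u1) + w*(a1*b2-a2*b1) + p*(b1*u2-b2*u1))
        = k*(-t*((a1*b2-a2*b1)*(a1*u2-a2*u1)) + w*(a1*b2-a2*b1)\<^sup>2 + p*((a1*b2-a2*b1)*(b1*u2-b2*u1)))"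
        by (simp add: power2_eq_square algebra_simps)
      also have "\<dots> = k*(-t*((1-p\<^sup>2)/k*(-t*w/k) - (-p*t/k)*(-1 - p*w/k))
          + w*((k - t\<^sup>2 - k*p\<^sup>2)/k\<^sup>2) + p*((-p*t/k)*(-t*w/k) - (-1 - p*w/k)*((k-t\<^sup>2)/k)))"
        unfolding l1 l2 axb2 aa bb ab bu au by simp
      also have "\<dots> = k*p + w" using False by (simp add: power2_eq_square field_simps)
      finally show ?thesis .
    qed
    have A: "(G1*H2 - G2*H1)/(G1\<^sup>2+G2\<^sup>2) * G3 = p*(k*p+w)/(t\<^sup>2+k*p\<^sup>2)"
    proof -
      have ne: "t\<^sup>2+k*p\<^sup>2 \<noteq> 0" using pos by auto
      have "(G1*H2 - G2*H1)/(G1\<^sup>2+G2\<^sup>2) * G3 =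
          p*(k*(a1*b2-a2*b1)*(-t*(a1*u2-a2*u1) + w*(a1*b2-a2*b1) + p*(b1*u2-b2*u1)))/(t\<^sup>2+k*p\<^sup>2)"
        unfolding X G12 G3_def using False ne by (simp add: field_simps)
      then show ?thesis unfolding key .
    qed
    have B: "tau'/(1+k*tau\<^sup>2) = (t\<^sup>2 - p*w)/(t\<^sup>2+k*p\<^sup>2)"
    proof -
      have kp: "k*p\<^sup>2 \<noteq> 0" using False pp by simp
      have ne: "t\<^sup>2+k*p\<^sup>2 \<noteq> 0" using pos by auto
      have "((t\<^sup>2 - p*w)/(k*p\<^sup>2)) / ((t\<^sup>2+k*p\<^sup>2)/(k*p\<^sup>2)) = (t\<^sup>2 - p*w)/(t\<^sup>2+k*p\<^sup>2)"
        using kp ne by (simp add: divide_divide_eq_left divide_divide_eq_right)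
      then show ?thesis unfolding tau' ktau .
    qed
    have C: "(t\<^sup>2 - p*w)/(t\<^sup>2+k*p\<^sup>2) = 1 - p*(k*p+w)/(t\<^sup>2+k*p\<^sup>2)"
    proof -
      have ne: "t\<^sup>2+k*p\<^sup>2 \<noteq> 0" using pos by auto
      show ?thesis using ne by (simp add: field_simps) (simp add: algebra_simps power2_eq_square)
    qed
    have gpos: "G1\<^sup>2+G2\<^sup>2 > 0" using G12 pos by simp
    have "tau'/(1+k*tau\<^sup>2) = 1 - (G1*H2 - G2*H1)/(G1\<^sup>2+G2\<^sup>2) * G3" by (simp only: A B C)
    then show ?thesis using ktaupos gpos by simp
  qed
  then show "1 + k*tau\<^sup>2 > 0" "G1\<^sup>2+G2\<^sup>2 > 0"
    "tau'/(1+k*tau\<^sup>2) = 1 - (G1*H2 - G2*H1)/(G1\<^sup>2+G2\<^sup>2) * G3" by auto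
qed



lemma comp_deriv:
  fixes f :: "real \<Rightarrow> real^'n"
  assumes "(f has_vector_derivative f') (at s)"
  shows "((\<lambda>s. f s $ i) has_real_derivative f' $ i) (at s)"
  using bounded_linear.has_vector_derivative[OF bounded_linear_vec_nth assms, of i]
  by (simp add: has_real_derivative_iff_has_vector_derivative)

lemma Jk_F: "Jk k (gamma_om k w t) (vector_derivative (gamma_om k w) (at t)) = vector [- sin w, cos w, 0]"
proof -
  have e: "Cf k t * Cf k t = 1 - k * (ell k t * ell k t)" using Cf_ell[of k t] by (simp add: power2_eq_square)
  have 1: "ell k t * sin w * (- k * ell k t) - Cf k t * (Cf k t * sin w) = - sin w"
  proof -
    have "ell k t * sin w * (- k * ell k t) - Cf k t * (Cf k t * sin w) = - sin w * (Cf k t * Cf k t + k * (ell k t * ell k t))"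
      by (simp add: algebra_simps)
    then show ?thesis unfolding e by simp
  qed
  have 2: "Cf k t * (Cf k t * cos w) - ell k t * cos w * (- k * ell k t) = cos w"
  proof -
    have "Cf k t * (Cf k t * cos w) - ell k t * cos w * (- k * ell k t) = cos w * (Cf k t * Cf k t + k * (ell k t * ell k t))"
      by (simp add: algebra_simps)
    then show ?thesis unfolding e by simp
  qed
  have 3: "sin w * (Cf k t * Cf k t) + k * (sin w * (ell k t * ell k t)) = sin w"
    by (simp add: e algebra_simps)
  have 4: "cos w * (Cf k t * Cf k t) + k * (cos w * (ell k t * ell k t)) = cos w"
    by (simp add: e algebra_simps)
  show ?thesis unfolding vd_gamma_om gamma_om_comp Jk_def
    by (simp add: vec_eq_iff forall_3 algebra_simps 3 4)
qed

lemma foot_comp: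
  "expm k (gamma_om k w rr) (- Jk k (gamma_om k w rr) (vector_derivative (gamma_om k w) (at rr))) xx
   = vector [Cf k xx * ell k rr * cos w + ell k xx * sin w,
             Cf k xx * ell k rr * sin w - ell k xx * cos w, Cf k xx * Cf k rr]"
  unfolding Jk_F unfolding expm_def gamma_om_comp Cf_def[symmetric]
  by (simp add: vec_eq_iff forall_3)

lemma halfplane_comp:
  assumes "p \<in> halfplane k w rr"
  shows "Cf k rr * (cos w * p$1 + sin w * p$2) - ell k rr * p$3 \<le> 0"
proof -
  have pM: "p \<in> Mk k" and le: "Bk k (p - gamma_om k w rr) (vector_derivative (gamma_om k w) (at rr)) \<le> 0"
    using assms unfolding halfplane_def by auto
  have cs: "cos w * cos w + sin w * sin w = 1" by (simp add: sin_squared_eq power2_eq_square)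
  show ?thesis
  proof (cases "k = 0")
    case True
    have "p$3 = 1" using pM True unfolding Mk_def by (auto simp: power2_eq_1_iff)
    moreover have cs': "rr * (cos w * cos w) + rr * (sin w * sin w) = rr"
      by (metis cs distrib_left mult.right_neutral)
    moreover have "Cf k rr = 1" using True by (simp add: Cf_def)
    moreover have "ell k rr = rr" using True by (simp add: ell_def)
    moreover have "Bk k (p - gamma_om k w rr) (vector_derivative (gamma_om k w) (at rr))
       = (cos w * p$1 + sin w * p$2) - rr"
      using True cs' unfolding Bk_def vd_gamma_om gamma_om_comp \<open>Cf k rr = 1\<close> \<open>ell k rr = rr\<close>
      by (simp add: algebra_simps)
    ultimately show ?thesis using le by simp
  next
    case False
    have csk: "k * (ell k rr * Cf k rr) = k * (cos w * (cos w * (ell k rr * Cf k rr))) +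
     k * (sin w * (sin w * (ell k rr * Cf k rr)))"
    proof -
      have "k * (cos w * (cos w * (ell k rr * Cf k rr))) + k * (sin w * (sin w * (ell k rr * Cf k rr)))
        = k * (ell k rr * Cf k rr) * (cos w * cos w + sin w * sin w)" by (simp only: algebra_simps)
      then show ?thesis using cs by (metis mult.right_neutral)
    qed
    have "Bk k (p - gamma_om k w rr) (vector_derivative (gamma_om k w) (at rr))
       = Cf k rr * (cos w * p$1 + sin w * p$2) - ell k rr * p$3"
      using False csk unfolding Bk_def vd_gamma_om gamma_om_comp
      by (simp add: field_simps)
    then show ?thesis using le cs by simp
  qed
qed

definition atk :: "real \<Rightarrow> real \<Rightarrow> real" where
  "atk k y = (if k > 0 then arctan (sqrt k * y) / sqrt k else if k = 0 then y
              else artanh (sqrt (-k) * y) / sqrt (-k))"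

lemma atk_deriv:
  assumes "1 + k * y\<^sup>2 > 0"
  shows "(atk k has_real_derivative 1 / (1 + k * y\<^sup>2)) (at y)"
proof -
  consider "k > 0" | "k = 0" | "k < 0" by linarith
  then show ?thesis
  proof cases
    case 1
    have e: "sqrt k * sqrt k = k" using 1 by simp
    have ky: "k * y\<^sup>2 \<ge> 0" using 1 by simp
    have "k + k * (k * y\<^sup>2) = k * (1 + k * y\<^sup>2)" by (simp add: algebra_simps)
    moreover have "1 + k * y\<^sup>2 > 0" using ky by linarith
    then have "k * (1 + k * y\<^sup>2) > 0" using 1 by (intro mult_pos_pos) auto
    ultimately have ne: "k + k * (k * y\<^sup>2) \<noteq> 0" "1 + k * y\<^sup>2 \<noteq> 0" using ky by auto
    have "((\<lambda>y. arctan (sqrt k * y) / sqrt k) has_real_derivative 1 / (1 + k * y\<^sup>2)) (at y)"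
      using 1 ne by (auto intro!: derivative_eq_intros simp: power_mult_distrib field_simps)
    then show ?thesis using 1 unfolding atk_def[abs_def] by simp
  next
    case 2 then show ?thesis unfolding atk_def[abs_def] by (auto intro!: derivative_eq_intros)
  next
    case 3
    have e: "(sqrt (-k) * y)\<^sup>2 = - k * y\<^sup>2" using 3 by (simp add: power_mult_distrib)
    have lt: "\<bar>sqrt (-k) * y\<bar> < 1"
    proof -
      have "(sqrt (-k) * y)\<^sup>2 < 1" using assms e by simp
      then show ?thesis by (simp add: abs_square_less_1)
    qed
    have d1: "((\<lambda>y. sqrt (-k) * y) has_real_derivative sqrt (-k)) (at y)"
      by (auto intro!: derivative_eq_intros)
    have d2: "((\<lambda>y. artanh (sqrt (-k) * y)) has_real_derivative (1 / (1 - (sqrt (-k) * y)\<^sup>2)) * sqrt (-k)) (at y)"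
      using DERIV_chain2[OF artanh_real_has_field_derivative[OF lt] d1] .
    have d3: "((\<lambda>y. artanh (sqrt (-k) * y) / sqrt (-k)) has_real_derivative (1 / (1 - (sqrt (-k) * y)\<^sup>2)) * sqrt (-k) / sqrt (-k)) (at y)"
      using DERIV_cdivide[OF d2] .
    have "(1 / (1 - (sqrt (-k) * y)\<^sup>2)) * sqrt (-k) / sqrt (-k) = 1 / (1 + k * y\<^sup>2)"
      using 3 unfolding e by simp
    with d3 have "((\<lambda>y. artanh (sqrt (-k) * y) / sqrt (-k)) has_real_derivative 1 / (1 + k * y\<^sup>2)) (at y)"
      by simp
    then show ?thesis using 3 unfolding atk_def[abs_def] by simp
  qed
qed

lemma per_nat:
  assumes per: "\<forall>s. g (s + L) = g s"
  shows "g (s + real n * L) = g s"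
  by (induction n) (auto simp: algebra_simps per[rule_format, of "s + real _ * L", simplified algebra_simps])

lemma per_int:
  assumes per: "\<forall>s. g (s + L) = g s"
  shows "g (s + real_of_int n * L) = g s"
proof (cases "n \<ge> 0")
  case True
  then obtain m where "n = int m" by (metis nonneg_eq_int)
  then show ?thesis using per_nat[OF per] by simp
next
  case False
  define m where "m = nat (- n)"
  have m: "n = - int m" using False unfolding m_def by simp
  have "g (s + real_of_int n * L) = g (s + real_of_int n * L + real m * L)" using per_nat[OF per] by simp
  also have "\<dots> = g s" using m by simp
  finally show ?thesis .
qed



lemma cross_par:
  fixes n1 n2 n3 p1 p2 p3 t1 t2 t3 :: real
  assumes "n1*p1+n2*p2+n3*p3 = 0" "n1*t1+n2*t2+n3*t3 = 0"
  shows "n1*(p3*t1-p1*t3) = n2*(p2*t3-p3*t2)" "n1*(p1*t2-p2*t1) = n3*(p2*t3-p3*t2)"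
    "n2*(p1*t2-p2*t1) = n3*(p3*t1-p1*t3)"
proof -
  have "n1*(p3*t1-p1*t3) - n2*(p2*t3-p3*t2) = p3*(n1*t1+n2*t2+n3*t3) - t3*(n1*p1+n2*p2+n3*p3)"
    by (simp add: algebra_simps)
  then show "n1*(p3*t1-p1*t3) = n2*(p2*t3-p3*t2)" using assms by simp
  have "n1*(p1*t2-p2*t1) - n3*(p2*t3-p3*t2) = - p2*(n1*t1+n2*t2+n3*t3) + t2*(n1*p1+n2*p2+n3*p3)"
    by (simp add: algebra_simps)
  then show "n1*(p1*t2-p2*t1) = n3*(p2*t3-p3*t2)" using assms by simp
  have "n2*(p1*t2-p2*t1) - n3*(p3*t1-p1*t3) = p1*(n1*t1+n2*t2+n3*t3) - t1*(n1*p1+n2*p2+n3*p3)"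
    by (simp add: algebra_simps)
  then show "n2*(p1*t2-p2*t1) = n3*(p3*t1-p1*t3)" using assms by simp
qed

lemma sq_id: "((c::real)*g1 + s*g2)\<^sup>2 + (c*g2 - s*g1)\<^sup>2 = (c\<^sup>2 + s\<^sup>2) * (g1\<^sup>2 + g2\<^sup>2)"
  by (simp add: power2_eq_square algebra_simps)

theorem theorem5p2:
  fixes k L :: real and K :: "(real^3) set" and \<gamma> :: "real \<Rightarrow> real^3"
    and \<omega> r x :: "real \<Rightarrow> real"
  assumes KM: "K \<subseteq> Mk k"
    and hemi: "k > 0 \<longrightarrow> (\<forall>p\<in>K. p$3 > 0)"
    and cpt: "compact K"
    and cvx: "gconvex k K"
    and int: "(top_of_set (Mk k)) interior_of K \<noteq> {}"
    and Lpos: "L > 0"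
    and C2: "C2_curve \<gamma>"
    and per: "\<forall>s. \<gamma> (s + L) = \<gamma> s"
    and inj: "inj_on \<gamma> {0..<L}"
    and bd: "\<gamma> ` {0..L} = (top_of_set (Mk k)) frontier_of K"
    and unit: "\<forall>s. Bk k (vector_derivative \<gamma> (at s)) (vector_derivative \<gamma> (at s)) = 1"
    and ccw: "\<forall>s. \<exists>\<epsilon>>0. \<forall>t\<in>{0<..<\<epsilon>}.
               expm k (\<gamma> s) (Jk k (\<gamma> s) (vector_derivative \<gamma> (at s))) t
                 \<in> (top_of_set (Mk k)) interior_of K"
    and om_cont: "continuous_on UNIV \<omega>"
    and supp: "\<forall>s. K \<subseteq> halfplane k (\<omega> s) (r s)"
    and foot: "\<forall>s. \<gamma> s = expm k (gamma_om k (\<omega> s) (r s))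
                   (- Jk k (gamma_om k (\<omega> s) (r s))
                         (vector_derivative (gamma_om k (\<omega> s)) (at (r s))))
                   (x s)"
  shows "(\<forall>s. \<omega> differentiable (at s))
    \<and> ((\<lambda>s. deriv \<omega> s * lsq_dtheta (\<gamma> s) (vector_derivative \<gamma> (at s)))
          has_integral L) {0..L}
    \<and> ((\<lambda>s. kappa_g k \<gamma> s * lsq_dtheta (\<gamma> s) (vector_derivative \<gamma> (at s))
              * (1 - k * aa k (x s)) / (1 - k * aa k (r s)))
          has_integral L) {0..L}"
proof -
  define T where "T = (\<lambda>t. vector_derivative \<gamma> (at t))"
  define U where "U = (\<lambda>t. vector_derivative T (at t))"
  have dg: "(\<gamma> has_vector_derivative T s) (at s)" for s
    using C2 unfolding C2_curve_def T_def using vector_derivative_works by blast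
  have dT: "(T has_vector_derivative U s) (at s)" for s
    using C2 unfolding C2_curve_def T_def U_def using vector_derivative_works by blast
  have dP: "((\<lambda>s. \<gamma> s $ i) has_real_derivative T s $ i) (at s)" for s i
    using comp_deriv[OF dg] .
  have dTc: "((\<lambda>s. T s $ i) has_real_derivative U s $ i) (at s)" for s i
    using comp_deriv[OF dT] .
  have clK: "closedin (top_of_set (Mk k)) K" using closed_subset[OF KM compact_imp_closed[OF cpt]] .
  have fK: "(top_of_set (Mk k)) frontier_of K \<subseteq> K" by (rule frontier_of_subset_closedin[OF clK])
  have inK: "\<gamma> s \<in> K" for s
  proof -
    define n where "n = floor (s / L)"
    define s' where "s' = s - real_of_int n * L"
    have a: "real_of_int n \<le> s / L" "s / L < real_of_int n + 1" unfolding n_def by linarith+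
    have "real_of_int n * L \<le> s" using a(1) Lpos by (simp add: pos_le_divide_eq)
    moreover have "s < (real_of_int n + 1) * L" using a(2) Lpos by (simp add: pos_divide_less_eq)
    ultimately have "s' \<in> {0..L}" unfolding s'_def by (auto simp: algebra_simps)
    moreover have "\<gamma> s = \<gamma> s'" using per_int[OF per, of s' n] by (simp add: s'_def)
    ultimately show ?thesis using bd fK by auto
  qed
  have M1: "k*((\<gamma> s$1)\<^sup>2+(\<gamma> s$2)\<^sup>2) + (\<gamma> s$3)\<^sup>2 = 1" for s
    using inK[of s] KM unfolding Mk_def by auto
  have M2: "\<gamma> s $ 3 > 0" for s
    using inK[of s] KM hemi unfolding Mk_def by auto
  have M3: "k = 0 \<Longrightarrow> \<gamma> s $ 3 = 1" for s
    using M1[of s] M2[of s] by (auto simp: power2_eq_1_iff)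
  have c2: "k*(\<gamma> s$1 * T s$1 + \<gamma> s$2 * T s$2) + \<gamma> s$3 * T s$3 = 0" for s
  proof -
    have "((\<lambda>s. k*((\<gamma> s$1)\<^sup>2+(\<gamma> s$2)\<^sup>2) + (\<gamma> s$3)\<^sup>2) has_real_derivative
       2 * (k*(\<gamma> s$1 * T s$1 + \<gamma> s$2 * T s$2) + \<gamma> s$3 * T s$3)) (at s)"
      by (auto intro!: derivative_eq_intros dP simp: algebra_simps)
    moreover have "(\<lambda>s. k*((\<gamma> s$1)\<^sup>2+(\<gamma> s$2)\<^sup>2) + (\<gamma> s$3)\<^sup>2) = (\<lambda>s. 1)" using M1 by simp
    ultimately have "((\<lambda>s. 1::real) has_real_derivative
       2 * (k*(\<gamma> s$1 * T s$1 + \<gamma> s$2 * T s$2) + \<gamma> s$3 * T s$3)) (at s)" by simp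
    then have "2 * (k*(\<gamma> s$1 * T s$1 + \<gamma> s$2 * T s$2) + \<gamma> s$3 * T s$3) = 0"
      using DERIV_const DERIV_unique by blast
    then show ?thesis by simp
  qed
  have c3: "(T s$1)\<^sup>2 + (T s$2)\<^sup>2 + (T s$3)\<^sup>2/k = 1" for s
    using unit[rule_format, of s] unfolding Bk_def T_def by (simp add: power2_eq_square)
  have c5: "T s$1 * U s$1 + T s$2 * U s$2 + T s$3 * U s$3 / k = 0" for s
  proof -
    define ik where "ik = 1/k"
    have "((\<lambda>s. (T s$1)\<^sup>2 + (T s$2)\<^sup>2 + ik * (T s$3)\<^sup>2) has_real_derivative
       2 * (T s$1 * U s$1 + T s$2 * U s$2 + ik * (T s$3 * U s$3))) (at s)"
      by (auto intro!: derivative_eq_intros dTc simp: algebra_simps)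
    moreover have "(\<lambda>s. (T s$1)\<^sup>2 + (T s$2)\<^sup>2 + ik * (T s$3)\<^sup>2) = (\<lambda>s. 1)" using c3 by (simp add: ik_def)
    ultimately have "((\<lambda>s. 1::real) has_real_derivative
       2 * (T s$1 * U s$1 + T s$2 * U s$2 + ik * (T s$3 * U s$3))) (at s)" by simp
    then have "2 * (T s$1 * U s$1 + T s$2 * U s$2 + ik * (T s$3 * U s$3)) = 0"
      using DERIV_const DERIV_unique by blast
    then show ?thesis by (simp add: ik_def)
  qed
  have c4: "k*((T s$1)\<^sup>2+(T s$2)\<^sup>2 + \<gamma> s$1 * U s$1 + \<gamma> s$2 * U s$2) + (T s$3)\<^sup>2 + \<gamma> s$3 * U s$3 = 0" for s
  proof -
    have "((\<lambda>s. k*(\<gamma> s$1 * T s$1 + \<gamma> s$2 * T s$2) + \<gamma> s$3 * T s$3) has_real_derivative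
       k*((T s$1)\<^sup>2+(T s$2)\<^sup>2 + \<gamma> s$1 * U s$1 + \<gamma> s$2 * U s$2) + (T s$3)\<^sup>2 + \<gamma> s$3 * U s$3) (at s)"
      by (auto intro!: derivative_eq_intros dP dTc simp: algebra_simps power2_eq_square)
    moreover have "(\<lambda>s. k*(\<gamma> s$1 * T s$1 + \<gamma> s$2 * T s$2) + \<gamma> s$3 * T s$3) = (\<lambda>s. 0)" using c2 by simp
    ultimately have "((\<lambda>s. 0::real) has_real_derivative
       k*((T s$1)\<^sup>2+(T s$2)\<^sup>2 + \<gamma> s$1 * U s$1 + \<gamma> s$2 * U s$2) + (T s$3)\<^sup>2 + \<gamma> s$3 * U s$3) (at s)" by simp
    then show ?thesis using DERIV_const DERIV_unique by blast
  qed
  have K0: "k = 0 \<Longrightarrow> \<gamma> s $ 3 = 1 \<and> T s $ 3 = 0 \<and> U s $ 3 = 0" for s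
  proof -
    assume k0: "k = 0"
    have a: "\<gamma> s $ 3 = 1" using M3 k0 by simp
    moreover have b: "T s $ 3 = 0" using c2[of s] a k0 by simp
    moreover have "U s $ 3 = 0" using c4[of s] a b k0 by simp
    ultimately show ?thesis by simp
  qed
  define G1 where "G1 s = \<gamma> s$2 * T s$3 - \<gamma> s$3 * T s$2" for s
  define G2 where "G2 s = \<gamma> s$3 * T s$1 - \<gamma> s$1 * T s$3" for s
  define G3 where "G3 s = \<gamma> s$1 * T s$2 - \<gamma> s$2 * T s$1" for s
  define H1 where "H1 s = \<gamma> s$2 * U s$3 - \<gamma> s$3 * U s$2" for s
  define H2 where "H2 s = \<gamma> s$3 * U s$1 - \<gamma> s$1 * U s$3" for s
  have qG: "(G1 s)\<^sup>2 + (G2 s)\<^sup>2 + k * (G3 s)\<^sup>2 = 1" for s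
    unfolding G1_def G2_def G3_def
    using qG_lemma[OF M1[of s] c2[of s] c3[of s]] K0[of s] by blast
  have geo: "cos (\<omega> s) * G2 s = sin (\<omega> s) * G1 s \<and> (Cf k (r s))\<^sup>2 = (G1 s)\<^sup>2 + (G2 s)\<^sup>2
      \<and> \<gamma> s $ 3 = Cf k (x s) * Cf k (r s)" for s
  proof -
    define c where "c = cos (\<omega> s)"
    define ww where "ww = sin (\<omega> s)"
    define Cr where "Cr = Cf k (r s)"
    define lr where "lr = ell k (r s)"
    define Cx where "Cx = Cf k (x s)"
    define lx where "lx = ell k (x s)"
    have cs: "c * c + ww * ww = 1" unfolding c_def ww_def by simp
    have Pc: "\<gamma> s = vector [Cx * lr * c + lx * ww, Cx * lr * ww - lx * c, Cx * Cr]"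
      using foot[rule_format, of s] unfolding foot_comp c_def ww_def Cr_def lr_def Cx_def lx_def .
    have P1: "\<gamma> s $ 1 = Cx * lr * c + lx * ww" and P2: "\<gamma> s $ 2 = Cx * lr * ww - lx * c"
      and P3: "\<gamma> s $ 3 = Cx * Cr" using Pc by simp_all
    define f where "f \<sigma> = Cr * (c * \<gamma> \<sigma> $ 1 + ww * \<gamma> \<sigma> $ 2) - lr * \<gamma> \<sigma> $ 3" for \<sigma>
    have fle: "f \<sigma> \<le> 0" for \<sigma>
      using halfplane_comp[of "\<gamma> \<sigma>" k "\<omega> s" "r s"] supp inK[of \<sigma>]
      unfolding f_def c_def ww_def Cr_def lr_def by blast
    have NP: "Cr * (c * \<gamma> s $ 1 + ww * \<gamma> s $ 2) - lr * \<gamma> s $ 3 = 0"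
    proof -
      have "Cr * (c * \<gamma> s $ 1 + ww * \<gamma> s $ 2) - lr * \<gamma> s $ 3 = Cr * Cx * lr * (c * c + ww * ww) - lr * (Cx * Cr)"
        unfolding P1 P2 P3 by (simp add: algebra_simps)
      then show ?thesis using cs by simp
    qed
    have df: "(f has_real_derivative Cr * (c * T s $ 1 + ww * T s $ 2) - lr * T s $ 3) (at s)"
      unfolding f_def[abs_def] by (auto intro!: derivative_eq_intros dP)
    have NT: "Cr * (c * T s $ 1 + ww * T s $ 2) - lr * T s $ 3 = 0"
      using DERIV_local_max[OF df, of 1] fle NP unfolding f_def by auto
    have qN: "(Cr*c)\<^sup>2 + (Cr*ww)\<^sup>2 + k*(-lr)\<^sup>2 = 1"
    proof -
      have "(Cr*c)\<^sup>2 + (Cr*ww)\<^sup>2 + k*(-lr)\<^sup>2 = Cr\<^sup>2 * (c*c+ww*ww) + k*lr\<^sup>2"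
        by (simp add: power2_eq_square algebra_simps)
      then show ?thesis using cs Cf_ell[of k "r s"] unfolding Cr_def lr_def by simp
    qed
    have np: "(Cr*c)*\<gamma> s$1 + (Cr*ww)*\<gamma> s$2 + (-lr)*\<gamma> s$3 = 0" using NP by (simp add: algebra_simps)
    have nt: "(Cr*c)*T s$1 + (Cr*ww)*T s$2 + (-lr)*T s$3 = 0" using NT by (simp add: algebra_simps)
    note cp = cross_par[OF np nt]
    have par: "(Cr*c)\<^sup>2 + (Cr*ww)\<^sup>2 = (G1 s)\<^sup>2 + (G2 s)\<^sup>2"
      using parallel_lemma[OF cp[folded G1_def G2_def G3_def] qN qG[of s]]
      unfolding G1_def G2_def G3_def by blast
    have Cr2: "Cr\<^sup>2 = (G1 s)\<^sup>2 + (G2 s)\<^sup>2"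
    proof -
      have "(Cr*c)\<^sup>2 + (Cr*ww)\<^sup>2 = Cr\<^sup>2 * (c*c+ww*ww)" by (simp add: power2_eq_square algebra_simps)
      then show ?thesis using par cs by simp
    qed
    have Crne: "Cr \<noteq> 0" using M2[of s] P3 by auto
    have "Cr * (c * G2 s) = Cr * (ww * G1 s)" using cp(1) unfolding G1_def G2_def by (simp add: algebra_simps)
    then have "c * G2 s = ww * G1 s" using Crne by simp
    then show ?thesis using Cr2 P3 unfolding c_def ww_def Cr_def Cx_def by simp
  qed
  have dG1: "(G1 has_real_derivative H1 s) (at s)" for s
    unfolding G1_def[abs_def] H1_def by (auto intro!: derivative_eq_intros dP dTc simp: algebra_simps)
  have dG2: "(G2 has_real_derivative H2 s) (at s)" for s
    unfolding G2_def[abs_def] H2_def by (auto intro!: derivative_eq_intros dP dTc simp: algebra_simps)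
  have Gpos: "(G1 s)\<^sup>2 + (G2 s)\<^sup>2 > 0" for s
  proof -
    have "Cf k (r s) \<noteq> 0" using geo[of s] M2[of s] by auto
    then show ?thesis using geo[of s] by (metis zero_less_power2)
  qed
  define nG where "nG s = sqrt ((G1 s)\<^sup>2 + (G2 s)\<^sup>2)" for s
  have nGpos: "nG s > 0" for s unfolding nG_def using Gpos by simp
  have nG2: "(nG s)\<^sup>2 = (G1 s)\<^sup>2 + (G2 s)\<^sup>2" for s unfolding nG_def using Gpos[of s] by simp
  define sg where "sg s = (cos (\<omega> s) * G1 s + sin (\<omega> s) * G2 s) / nG s" for s
  have sg2: "sg s = 1 \<or> sg s = -1" for s
  proof -
    have "(cos (\<omega> s) * G1 s + sin (\<omega> s) * G2 s)\<^sup>2 + (cos (\<omega> s) * G2 s - sin (\<omega> s) * G1 s)\<^sup>2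
       = ((cos (\<omega> s))\<^sup>2 + (sin (\<omega> s))\<^sup>2) * ((G1 s)\<^sup>2 + (G2 s)\<^sup>2)"
      by (rule sq_id)
    then have "(cos (\<omega> s) * G1 s + sin (\<omega> s) * G2 s)\<^sup>2 = (nG s)\<^sup>2" using geo[of s] nG2[of s] by simp
    then have "(sg s)\<^sup>2 = 1" unfolding sg_def using nGpos[of s] by (simp add: power_divide)
    then show ?thesis by (simp add: power2_eq_1_iff)
  qed
  have contG1: "continuous_on UNIV G1" using dG1
    by (meson DERIV_isCont continuous_at_imp_continuous_on)
  have contG2: "continuous_on UNIV G2" using dG2
    by (meson DERIV_isCont continuous_at_imp_continuous_on)
  have contnG: "continuous_on UNIV nG" unfolding nG_def[abs_def]
    by (intro continuous_intros contG1 contG2)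
  have contsg: "continuous_on UNIV sg" unfolding sg_def[abs_def]
    using nGpos by (intro continuous_intros contG1 contG2 contnG om_cont) (auto simp: less_imp_neq[symmetric])
  have "sg constant_on UNIV"
  proof (rule continuous_finite_range_constant[OF connected_UNIV contsg])
    have "sg ` UNIV \<subseteq> {1, -1}" using sg2 by auto
    then show "finite (sg ` UNIV)" using finite_subset by blast
  qed
  then obtain a where a: "\<And>s. sg s = a" unfolding constant_on_def by auto
  have a2: "a * a = 1" using sg2[of 0] a[of 0] by auto
  have cosw: "cos (\<omega> s) = a * G1 s / nG s" and sinw: "sin (\<omega> s) = a * G2 s / nG s" for s
  proof -
    have e: "cos (\<omega> s) * G1 s + sin (\<omega> s) * G2 s = a * nG s" using a[of s] nGpos[of s] unfolding sg_def
      by (simp add: field_simps)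
    have g: "cos (\<omega> s) * G2 s = sin (\<omega> s) * G1 s" using geo by blast
    have "cos (\<omega> s) * (nG s)\<^sup>2 = G1 s * (cos (\<omega> s) * G1 s + sin (\<omega> s) * G2 s) + G2 s * (cos (\<omega> s) * G2 s - sin (\<omega> s) * G1 s)"
      unfolding nG2 by (simp add: power2_eq_square algebra_simps)
    also have "\<dots> = G1 s * (a * nG s)" unfolding e g by simp
    finally show "cos (\<omega> s) = a * G1 s / nG s" using nGpos[of s] by (simp add: power2_eq_square field_simps)
    have "sin (\<omega> s) * (nG s)\<^sup>2 = G2 s * (cos (\<omega> s) * G1 s + sin (\<omega> s) * G2 s) - G1 s * (cos (\<omega> s) * G2 s - sin (\<omega> s) * G1 s)"
      unfolding nG2 by (simp add: power2_eq_square algebra_simps)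
    also have "\<dots> = G2 s * (a * nG s)" unfolding e g by simp
    finally show "sin (\<omega> s) = a * G2 s / nG s" using nGpos[of s] by (simp add: power2_eq_square field_simps)
  qed
  have dom: "(\<omega> has_real_derivative (G1 s0 * H2 s0 - G2 s0 * H1 s0) / ((G1 s0)\<^sup>2 + (G2 s0)\<^sup>2)) (at s0)" for s0
  proof -
    have "isCont \<omega> s0" using om_cont by (simp add: continuous_on_eq_continuous_at)
    then obtain d where d: "d > 0" and dd: "\<And>s. dist s s0 < d \<Longrightarrow> dist (\<omega> s) (\<omega> s0) < pi/2"
      unfolding continuous_at_eps_delta by (metis pi_half_gt_zero)
    define h where "h s = (G1 s0 * G2 s - G2 s0 * G1 s) / (G1 s0 * G1 s + G2 s0 * G2 s)" for s
    have eq: "\<omega> s0 + arctan (h s) = \<omega> s" if ds: "dist s s0 < d" for s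
    proof -
      define del where "del = \<omega> s - \<omega> s0"
      have "\<bar>\<omega> s - \<omega> s0\<bar> < pi/2" using dd[OF ds] unfolding dist_real_def .
      then have dl: "-(pi/2) < del" "del < pi/2" unfolding del_def by linarith+
      have cpos: "cos del > 0" using dl by (intro cos_gt_zero_pi) auto
      have nn: "nG s * nG s0 > 0" using nGpos by simp
      have sd: "sin del = (G1 s0 * G2 s - G2 s0 * G1 s) / (nG s * nG s0)"
      proof -
        have "sin del = sin (\<omega> s) * cos (\<omega> s0) - cos (\<omega> s) * sin (\<omega> s0)"
          by (simp add: del_def sin_diff)
        also have "\<dots> = (a * G2 s / nG s) * (a * G1 s0 / nG s0) - (a * G1 s / nG s) * (a * G2 s0 / nG s0)"
          by (simp only: cosw sinw)
        also have "\<dots> = (a * a) * (G1 s0 * G2 s - G2 s0 * G1 s) / (nG s * nG s0)"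
          using nGpos[of s] nGpos[of s0] by (simp add: field_simps)
        finally show ?thesis using a2 by simp
      qed
      have cd: "cos del = (G1 s0 * G1 s + G2 s0 * G2 s) / (nG s * nG s0)"
      proof -
        have "cos del = cos (\<omega> s) * cos (\<omega> s0) + sin (\<omega> s) * sin (\<omega> s0)"
          by (simp add: del_def cos_diff)
        also have "\<dots> = (a * G1 s / nG s) * (a * G1 s0 / nG s0) + (a * G2 s / nG s) * (a * G2 s0 / nG s0)"
          by (simp only: cosw sinw)
        also have "\<dots> = (a * a) * (G1 s0 * G1 s + G2 s0 * G2 s) / (nG s * nG s0)"
          using nGpos[of s] nGpos[of s0] by (simp add: field_simps)
        finally show ?thesis using a2 by simp
      qed
      have "h s = tan del" unfolding tan_def sd cd h_def using nGpos[of s] nGpos[of s0] by simp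
      then show ?thesis using arctan_tan[OF dl] unfolding del_def by simp
    qed
    have dnum: "((\<lambda>s. G1 s0 * G2 s - G2 s0 * G1 s) has_real_derivative G1 s0 * H2 s0 - G2 s0 * H1 s0) (at s0)"
      by (auto intro!: derivative_eq_intros dG1 dG2)
    have dden: "((\<lambda>s. G1 s0 * G1 s + G2 s0 * G2 s) has_real_derivative G1 s0 * H1 s0 + G2 s0 * H2 s0) (at s0)"
      by (auto intro!: derivative_eq_intros dG1 dG2)
    have den0: "G1 s0 * G1 s0 + G2 s0 * G2 s0 \<noteq> 0" using Gpos[of s0] unfolding power2_eq_square by linarith
    have dh: "(h has_real_derivative
        ((G1 s0 * H2 s0 - G2 s0 * H1 s0) * (G1 s0 * G1 s0 + G2 s0 * G2 s0) -
         (G1 s0 * G2 s0 - G2 s0 * G1 s0) * (G1 s0 * H1 s0 + G2 s0 * H2 s0)) /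
        ((G1 s0 * G1 s0 + G2 s0 * G2 s0) * (G1 s0 * G1 s0 + G2 s0 * G2 s0))) (at s0)"
      unfolding h_def[abs_def] using DERIV_divide[OF dnum dden den0] by simp
    have h0: "h s0 = 0" unfolding h_def by simp
    have dah: "((\<lambda>s. \<omega> s0 + arctan (h s)) has_real_derivative
        (G1 s0 * H2 s0 - G2 s0 * H1 s0) / ((G1 s0)\<^sup>2 + (G2 s0)\<^sup>2)) (at s0)"
    proof -
      have "((\<lambda>s. \<omega> s0 + arctan (h s)) has_real_derivative 0 + inverse (1 + (h s0)\<^sup>2) *
        (((G1 s0 * H2 s0 - G2 s0 * H1 s0) * (G1 s0 * G1 s0 + G2 s0 * G2 s0) -
         (G1 s0 * G2 s0 - G2 s0 * G1 s0) * (G1 s0 * H1 s0 + G2 s0 * H2 s0)) /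
        ((G1 s0 * G1 s0 + G2 s0 * G2 s0) * (G1 s0 * G1 s0 + G2 s0 * G2 s0)))) (at s0)"
        by (intro DERIV_add DERIV_const DERIV_chain2[OF DERIV_arctan dh])
      moreover have nz: "\<not> (G1 s0 = 0 \<and> G2 s0 = 0)" using den0 by auto
      ultimately show ?thesis using den0 unfolding h0 by (simp add: power2_eq_square)
    qed
    show ?thesis
      by (rule has_field_derivative_transform_within[OF dah d]) (auto simp: eq dist_commute)
  qed
  define tau where "tau s = (\<gamma> s$1 * T s$1 + \<gamma> s$2 * T s$2) / (\<gamma> s$3)\<^sup>2" for s
  define tau' where "tau' s = (((T s$1)\<^sup>2 + (T s$2)\<^sup>2 + \<gamma> s$1 * U s$1 + \<gamma> s$2 * U s$2) * (\<gamma> s$3)\<^sup>2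
      - (\<gamma> s$1 * T s$1 + \<gamma> s$2 * T s$2) * (2 * \<gamma> s$3 * T s$3)) / ((\<gamma> s$3)\<^sup>2 * (\<gamma> s$3)\<^sup>2)" for s
  have dtau: "(tau has_real_derivative tau' s) (at s)" for s
  proof -
    have dn: "((\<lambda>s. \<gamma> s$1 * T s$1 + \<gamma> s$2 * T s$2) has_real_derivative
        (T s$1)\<^sup>2 + (T s$2)\<^sup>2 + \<gamma> s$1 * U s$1 + \<gamma> s$2 * U s$2) (at s)"
      by (auto intro!: derivative_eq_intros dP dTc simp: power2_eq_square algebra_simps)
    have dd: "((\<lambda>s. (\<gamma> s$3)\<^sup>2) has_real_derivative 2 * \<gamma> s$3 * T s$3) (at s)"
      by (auto intro!: derivative_eq_intros dP)
    have ne: "(\<gamma> s$3)\<^sup>2 \<noteq> 0" using M2[of s] by simp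
    show ?thesis unfolding tau_def[abs_def] tau'_def using DERIV_divide[OF dn dd ne] by simp
  qed
  have alg: "1 + k * (tau s)\<^sup>2 > 0 \<and>
      tau' s / (1 + k * (tau s)\<^sup>2) = 1 - (G1 s * H2 s - G2 s * H1 s) / ((G1 s)\<^sup>2 + (G2 s)\<^sup>2) * G3 s" for s
  proof -
    have c0: "k = 0 \<longrightarrow> \<gamma> s$3 = 1 \<and> T s$3 = 0 \<and> U s$3 = 0" using K0 by blast
    note m = main_alg[OF M1[of s] c2[of s] c3[of s] c4[of s] c5[of s] M2[of s] c0]
    show ?thesis using m(1) m(3) unfolding tau_def tau'_def G1_def G2_def G3_def H1_def H2_def by blast
  qed
  define Phi where "Phi s = atk k (tau s)" for s
  define Phi' where "Phi' s = 1 / (1 + k * (tau s)\<^sup>2) * tau' s" for s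
  have dPhi: "(Phi has_real_derivative Phi' s) (at s)" for s
    unfolding Phi_def[abs_def] Phi'_def
    using DERIV_chain2[OF atk_deriv[OF alg[of s, THEN conjunct1]] dtau[of s]] .
  have int_eq: "deriv \<omega> s * lsq_dtheta (\<gamma> s) (vector_derivative \<gamma> (at s)) = 1 - Phi' s" for s
  proof -
    have "deriv \<omega> s = (G1 s * H2 s - G2 s * H1 s) / ((G1 s)\<^sup>2 + (G2 s)\<^sup>2)"
      using DERIV_imp_deriv[OF dom] .
    moreover have "lsq_dtheta (\<gamma> s) (vector_derivative \<gamma> (at s)) = G3 s"
      unfolding lsq_dtheta_def G3_def T_def by simp
    moreover have "Phi' s = tau' s / (1 + k * (tau s)\<^sup>2)" unfolding Phi'_def by simp
    ultimately show ?thesis using alg[of s] by simp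
  qed
  have gL: "\<gamma> L = \<gamma> 0" using per[rule_format, of 0] by simp
  have TL: "T L = T 0"
  proof -
    have d1: "((\<lambda>s. s - L) has_vector_derivative 1) (at L)"
      using has_real_derivative_iff_has_vector_derivative[THEN iffD1, OF DERIV_diff[OF DERIV_ident DERIV_const, of L L]]
      by simp
    have "((\<gamma> \<circ> (\<lambda>s. s - L)) has_vector_derivative (1 *\<^sub>R T 0)) (at L)"
      using vector_diff_chain_at[OF d1] dg[of 0] by simp
    moreover have "\<gamma> \<circ> (\<lambda>s. s - L) = \<gamma>"
    proof
      fix s show "(\<gamma> \<circ> (\<lambda>s. s - L)) s = \<gamma> s" using per[rule_format, of "s - L"] by simp
    qed
    ultimately have "(\<gamma> has_vector_derivative T 0) (at L)" by simp
    then show ?thesis unfolding T_def using vector_derivative_at by metis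
  qed
  have PhiL: "Phi L = Phi 0" unfolding Phi_def tau_def gL TL ..
  have I1: "((\<lambda>s. 1 - Phi' s) has_integral L) {0..L}"
  proof -
    have "((\<lambda>s. s - Phi s) has_vector_derivative (1 - Phi' s)) (at s within {0..L})" for s
    proof -
      have "((\<lambda>s. s - Phi s) has_real_derivative (1 - Phi' s)) (at s)"
        by (intro DERIV_diff DERIV_ident dPhi)
      then show ?thesis
        by (simp add: has_real_derivative_iff_has_vector_derivative has_vector_derivative_at_within)
    qed
    then have "((\<lambda>s. 1 - Phi' s) has_integral ((L - Phi L) - (0 - Phi 0))) {0..L}"
      using fundamental_theorem_of_calculus[of 0 L "\<lambda>s. s - Phi s" "\<lambda>s. 1 - Phi' s"] Lpos by simp
    then show ?thesis unfolding PhiL by simp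
  qed
  have int_eq2: "kappa_g k \<gamma> s * lsq_dtheta (\<gamma> s) (vector_derivative \<gamma> (at s))
              * (1 - k * aa k (x s)) / (1 - k * aa k (r s)) = 1 - Phi' s" for s
  proof -
    have kap: "kappa_g k \<gamma> s = U s$1 * G1 s + U s$2 * G2 s + U s$3 * G3 s"
    proof -
      have "kappa_g k \<gamma> s = Bk k (U s) (Jk k (\<gamma> s) (T s))" unfolding kappa_g_def U_def T_def ..
      also have "Jk k (\<gamma> s) (T s) = vector [G1 s, G2 s, k * G3 s]"
        unfolding Jk_def G1_def G2_def G3_def ..
      finally have "kappa_g k \<gamma> s = U s$1 * G1 s + U s$2 * G2 s + U s$3 * (k * G3 s) / k"
        unfolding Bk_def by simp
      then show ?thesis using K0[of s] by (cases "k = 0") auto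
    qed
    have hid: "G1 s * H2 s - G2 s * H1 s = \<gamma> s$3 * (U s$1 * G1 s + U s$2 * G2 s + U s$3 * G3 s)"
      unfolding G1_def G2_def G3_def H1_def H2_def by (simp add: algebra_simps)
    have lsq: "lsq_dtheta (\<gamma> s) (vector_derivative \<gamma> (at s)) = G3 s"
      unfolding lsq_dtheta_def G3_def T_def by simp
    define Cr where "Cr = Cf k (r s)"
    define Cx where "Cx = Cf k (x s)"
    have P3: "\<gamma> s $ 3 = Cx * Cr" and Cr2: "Cr\<^sup>2 = (G1 s)\<^sup>2 + (G2 s)\<^sup>2"
      using geo[of s] unfolding Cr_def Cx_def by auto
    have Crne: "Cr \<noteq> 0" using M2[of s] P3 by auto
    have "kappa_g k \<gamma> s * lsq_dtheta (\<gamma> s) (vector_derivative \<gamma> (at s))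
              * (1 - k * aa k (x s)) / (1 - k * aa k (r s))
        = (U s$1 * G1 s + U s$2 * G2 s + U s$3 * G3 s) * G3 s * Cx / Cr"
      unfolding kap lsq Cx_def Cr_def Cf_def ..
    also have "\<dots> = (Cx * Cr * (U s$1 * G1 s + U s$2 * G2 s + U s$3 * G3 s)) / Cr\<^sup>2 * G3 s"
      using Crne by (simp add: power2_eq_square field_simps)
    also have "\<dots> = (G1 s * H2 s - G2 s * H1 s) / ((G1 s)\<^sup>2 + (G2 s)\<^sup>2) * G3 s"
      unfolding hid P3 Cr2 ..
    also have "\<dots> = 1 - Phi' s" using alg[of s] unfolding Phi'_def by simp
    finally show ?thesis .
  qed
  have diff: "\<omega> differentiable (at s)" for s
    using dom[of s] unfolding has_field_derivative_def differentiable_def by blast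
  show ?thesis
  proof (intro conjI allI)
    show "\<omega> differentiable (at s)" for s by (rule diff)
    show "((\<lambda>s. deriv \<omega> s * lsq_dtheta (\<gamma> s) (vector_derivative \<gamma> (at s))) has_integral L) {0..L}"
      unfolding int_eq by (rule I1)
    show "((\<lambda>s. kappa_g k \<gamma> s * lsq_dtheta (\<gamma> s) (vector_derivative \<gamma> (at s))
              * (1 - k * aa k (x s)) / (1 - k * aa k (r s))) has_integral L) {0..L}"
      unfolding int_eq2 by (rule I1)
  qed
qed

end
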